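(* Let $n\ge 2$, $N=\{1,\dots,n\}$, for each $i\in N$ let $A_i$ be a nonempty finite set, $A=\prod_{i\in N}A_i$, and let $u_i:A\to\mathbb{R}$ for $i\in N$. Then: (1) for any $\delta,\delta'$ with $0<\delta<\delta'\le 1$ and any $T\in\mathbb{N}$, $F(\delta',T)\subseteq F(\delta,T)$; (2) for any $\delta\in(0,1]$ and any $T\in\mathbb{N}$, $F(\delta,T)\subseteq F(\delta,T+1)$.
   Context: For $\delta\in(0,1]$, $T\in\mathbb{N}$ and $a^{[nT]}=(a^1,\dots,a^{nT})\in A^{nT}$, extend indices periodically by $a^s=a^{s-nT}$ for $s\ge nT+1$, and define for $i\in N$ $$U_i(a^{[nT]})=\frac{1}{\sum_{k=1}^{nT}\delta^{k-1}}\sum_{k=1}^{nT}\delta^{k-1}u_i\big(a^{(i-1)T+k}\big),$$ $U(a^{[nT]})=(U_i(a^{[nT]}))_{i\in N}$, and $F(\delta,T)=\operatorname{co}\left(\bigcup_{a^{[nT]}\in A^{nT}}\{U(a^{[nT]})\}\right)\subseteq\mathbb{R}^n$, where $\operatorname{co}$ denotes convex hull. *)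

theory Defs
  imports "HOL-Analysis.Analysis"
begin

text \<open>Convex hull of a set of payoff vectors, vectors in R^n being represented as
  functions nat => real (only coordinates 1..n are used; all others are 0).\<close>
definition co :: "(nat \<Rightarrow> real) set \<Rightarrow> (nat \<Rightarrow> real) set" where
  "co S = {x. \<exists>(m::nat) (c::nat \<Rightarrow> real) (p::nat \<Rightarrow> nat \<Rightarrow> real).
              (\<forall>j<m. 0 \<le> c j \<and> p j \<in> S) \<and> (\<Sum>j<m. c j) = 1 \<and>
              x = (\<lambda>i. \<Sum>j<m. c j * p j i) }"

definition per :: "nat \<Rightarrow> nat \<Rightarrow> nat" where
  "per L s = ((s - 1) mod L) + 1"

text \<open>U_i(a^[nT]); a sequence is a map k \<mapsto> a k (action profile) on {1..nT}.\<close>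
definition Upay :: "nat \<Rightarrow> nat \<Rightarrow> real \<Rightarrow> (nat \<Rightarrow> (nat \<Rightarrow> 'a) \<Rightarrow> real)
                    \<Rightarrow> (nat \<Rightarrow> (nat \<Rightarrow> 'a)) \<Rightarrow> nat \<Rightarrow> real" where
  "Upay n T \<delta> u a i =
     (\<Sum>k=1..n*T. \<delta> ^ (k - 1) * u i (a (per (n*T) ((i - 1) * T + k))))
     / (\<Sum>k=1..n*T. \<delta> ^ (k - 1))"

definition Uvec :: "nat \<Rightarrow> nat \<Rightarrow> real \<Rightarrow> (nat \<Rightarrow> (nat \<Rightarrow> 'a) \<Rightarrow> real)
                    \<Rightarrow> (nat \<Rightarrow> (nat \<Rightarrow> 'a)) \<Rightarrow> (nat \<Rightarrow> real)" where
  "Uvec n T \<delta> u a = (\<lambda>i. if i \<in> {1..n} then Upay n T \<delta> u a i else 0)"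

definition Fset :: "nat \<Rightarrow> (nat \<Rightarrow> 'a set) \<Rightarrow> (nat \<Rightarrow> (nat \<Rightarrow> 'a) \<Rightarrow> real)
                    \<Rightarrow> real \<Rightarrow> nat \<Rightarrow> (nat \<Rightarrow> real) set" where
  "Fset n Aset u \<delta> T =
     co (Uvec n T \<delta> u ` (PiE {1..n*T} (\<lambda>_. PiE {1..n} Aset)))"

end

theory Submission
  imports Defs
begin

definition GS :: "real \<Rightarrow> (nat \<Rightarrow> real) \<Rightarrow> nat \<Rightarrow> nat \<Rightarrow> real" where
  "GS x V z L = (\<Sum>k<L. x^k * V (z+k))"

lemma GS_rec:
  assumes "\<forall>q. V (q+L) = V q"
  shows "GS x V z L = (1 - x^L) * V z + x * GS x V (Suc z) L"
proof -
  have "x * GS x V (Suc z) L = (\<Sum>k<L. x^(Suc k) * V (z + Suc k))"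
    unfolding GS_def by (simp add: sum_distrib_left algebra_simps)
  also have "\<dots> = (\<Sum>k<Suc L. x^k * V (z+k)) - V z"
    by (subst sum.lessThan_Suc_shift) simp
  also have "\<dots> = GS x V z L + x^L * V z - V z"
  proof -
    have "V (z+L) = V z" using assms by simp
    then show ?thesis by (simp add: GS_def)
  qed
  finally show ?thesis by (simp add: algebra_simps)
qed

lemma GS_per:
  assumes "\<forall>q. V (q+L) = V q"
  shows "GS x V (z+L) L = GS x V z L"
  unfolding GS_def
proof (rule sum.cong)
  fix k assume "k \<in> {..<L}"
  have "V (z + L + k) = V (z + k + L)" by (simp add: ac_simps)
  then show "x ^ k * V (z + L + k) = x ^ k * V (z + k)" using assms by simp
qed simp

lemma sum_blocks:
  fixes f :: "nat \<Rightarrow> real"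
  shows "(\<Sum>q<n*T. f q) = (\<Sum>m<n. \<Sum>r<T. f (m*T + r))"
proof -
  have "(\<Sum>q<n*T. f q) = (\<Sum>m<n. sum f {m*T..<m*T+T})"
    by (rule sum.nat_group[symmetric])
  also have "\<dots> = (\<Sum>m<n. \<Sum>r<T. f (m*T + r))"
  proof (rule sum.cong)
    fix m
    have "sum f {m*T..<m*T+T} = sum f {0+m*T..<T+m*T}" by (simp add: add.commute)
    also have "\<dots> = (\<Sum>r=0..<T. f (r + m*T))" by (rule sum.shift_bounds_nat_ivl)
    finally show "sum f {m*T..<m*T+T} = (\<Sum>r<T. f (m*T + r))"
      by (simp add: atLeast0LessThan add.commute)
  qed simp
  finally show ?thesis .
qed

lemma GS_blocks:
  "GS x V (j*T) (n*T) = GS (x^T) (\<lambda>l. GS x V (l*T) T) j n"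
proof -
  have "GS x V (j*T) (n*T) = (\<Sum>m<n. \<Sum>r<T. x^(m*T+r) * V (j*T + (m*T+r)))"
    unfolding GS_def by (rule sum_blocks)
  also have "\<dots> = (\<Sum>m<n. (x^T)^m * (\<Sum>r<T. x^r * V ((j+m)*T + r)))"
  proof (rule sum.cong)
    fix m assume "m \<in> {..<n}"
    have e: "\<And>r. x^(m*T+r) = (x^T)^m * x^r" by (simp add: power_add power_mult mult.commute)
    show "(\<Sum>r<T. x^(m*T+r) * V (j*T + (m*T+r))) = (x^T)^m * (\<Sum>r<T. x^r * V ((j+m)*T + r))"
      unfolding e by (simp add: sum_distrib_left algebra_simps)
  qed simp
  finally show ?thesis unfolding GS_def .
qed

definition lam :: "real \<Rightarrow> real \<Rightarrow> nat \<Rightarrow> nat \<Rightarrow> real" where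
  "lam x x' L s = (if s = 0 then 1 - x * x'^(L-1) else x'^(s-1) * (x' - x))"

lemma part1_id:
  assumes per: "\<forall>q. V (q+L) = V q" and L: "L \<ge> 1"
  shows "(1 - x^L) * GS x' V z L = (\<Sum>s<L. lam x x' L s * GS x V (z+s) L)"
proof -
  obtain M where M: "L = Suc M" using L by (cases L) auto
  let ?G = "\<lambda>s. GS x V (z+s) L"
  have "(1 - x^L) * GS x' V z L = (\<Sum>s<L. x'^s * ((1 - x^L) * V (z+s)))"
    unfolding GS_def by (simp add: sum_distrib_left algebra_simps)
  also have "\<dots> = (\<Sum>s<L. x'^s * (?G s - x * ?G (Suc s)))"
  proof (rule sum.cong)
    fix s
    have "GS x V (z+s) L = (1 - x^L) * V (z+s) + x * GS x V (Suc (z+s)) L" by (rule GS_rec[OF per])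
    then show "x'^s * ((1 - x^L) * V (z+s)) = x'^s * (?G s - x * ?G (Suc s))" by simp
  qed simp
  also have "\<dots> = (\<Sum>s<L. x'^s * ?G s) - x * (\<Sum>s<L. x'^s * ?G (Suc s))"
    by (simp add: sum_distrib_left sum_subtractf algebra_simps)
  also have "(\<Sum>s<L. x'^s * ?G s) = ?G 0 + (\<Sum>s<M. x'^(Suc s) * ?G (Suc s))"
    unfolding M by (subst sum.lessThan_Suc_shift) simp
  also have "(\<Sum>s<L. x'^s * ?G (Suc s)) = (\<Sum>s<M. x'^s * ?G (Suc s)) + x'^M * ?G 0"
  proof -
    have "?G (Suc M) = ?G 0" using GS_per[OF per, of x z] M by (simp add: add.commute)
    then show ?thesis unfolding M by simp
  qed
  also have "(\<Sum>s<L. lam x x' L s * ?G s) = (1 - x * x'^M) * ?G 0 + (\<Sum>s<M. x'^s * (x' - x) * ?G (Suc s))"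
    unfolding M by (subst sum.lessThan_Suc_shift) (simp add: lam_def)
  ultimately show ?thesis
    by (simp add: algebra_simps sum_distrib_left sum_subtractf sum.distrib)
qed

lemma sum_split_nat: "(\<Sum>j<m1+m2. f j) = (\<Sum>j<m1. f j) + (\<Sum>j<m2. f (m1+j::nat)::real)"
  by (induction m2) (simp_all add: algebra_simps)

lemma co_base: "y \<in> S \<Longrightarrow> y \<in> co S"
  unfolding co_def
  by (rule CollectI, rule exI[of _ 1], rule exI[of _ "\<lambda>_. 1"], rule exI[of _ "\<lambda>_. y"]) auto

lemma co_bin:
  assumes y: "y \<in> co S" and w: "w \<in> co S" and t: "0 \<le> t" "t \<le> 1"
  shows "(\<lambda>i. t * y i + (1-t) * w i) \<in> co S"
proof -
  have "\<exists>(m::nat) c p. (\<forall>j<m. 0 \<le> c j \<and> p j \<in> S) \<and> (\<Sum>j<m. c j) = 1 \<and> y = (\<lambda>i. \<Sum>j<m. c j * p j i)"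
    using y by (simp add: co_def)
  then obtain m1 :: nat and c1 p1 where 1: "\<forall>j<m1. 0 \<le> c1 j \<and> p1 j \<in> S" "(\<Sum>j<m1. c1 j) = 1"
    "y = (\<lambda>i. \<Sum>j<m1. c1 j * p1 j i)" by blast
  have "\<exists>(m::nat) c p. (\<forall>j<m. 0 \<le> c j \<and> p j \<in> S) \<and> (\<Sum>j<m. c j) = 1 \<and> w = (\<lambda>i. \<Sum>j<m. c j * p j i)"
    using w by (simp add: co_def)
  then obtain m2 :: nat and c2 p2 where 2: "\<forall>j<m2. 0 \<le> c2 j \<and> p2 j \<in> S" "(\<Sum>j<m2. c2 j) = 1"
    "w = (\<lambda>i. \<Sum>j<m2. c2 j * p2 j i)" by blast
  define c where "c j = (if j < m1 then t * c1 j else (1-t) * c2 (j-m1))" for j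
  define p where "p j = (if j < m1 then p1 j else p2 (j-m1))" for j
  have a: "\<forall>j<m1+m2. 0 \<le> c j \<and> p j \<in> S"
  proof (intro allI impI)
    fix j assume "j < m1+m2"
    then show "0 \<le> c j \<and> p j \<in> S" using 1 2 t unfolding c_def p_def
      by (cases "j < m1") auto
  qed
  have b: "(\<Sum>j<m1+m2. c j) = 1"
  proof -
    have "(\<Sum>j<m1+m2. c j) = (\<Sum>j<m1. t * c1 j) + (\<Sum>j<m2. (1-t) * c2 j)"
      unfolding sum_split_nat c_def by simp
    also have "\<dots> = t * (\<Sum>j<m1. c1 j) + (1-t) * (\<Sum>j<m2. c2 j)"
      by (simp only: sum_distrib_left)
    finally show ?thesis using 1 2 by simp
  qed
  have e: "(\<lambda>i. t * y i + (1-t) * w i) = (\<lambda>i. \<Sum>j<m1+m2. c j * p j i)"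
  proof
    fix i
    have "(\<Sum>j<m1+m2. c j * p j i) = (\<Sum>j<m1. t * c1 j * p1 j i) + (\<Sum>j<m2. (1-t) * c2 j * p2 j i)"
      unfolding sum_split_nat c_def p_def by simp
    also have "\<dots> = t * y i + (1-t) * w i"
      unfolding 1 2 by (simp add: sum_distrib_left mult.assoc)
    finally show "t * y i + (1-t) * w i = (\<Sum>j<m1+m2. c j * p j i)" by simp
  qed
  show ?thesis unfolding co_def
    by (rule CollectI, rule exI[of _ "m1+m2"], rule exI[of _ c], rule exI[of _ p]) (use a b e in simp)
qed

lemma co_comb:
  fixes m :: nat and c :: "nat \<Rightarrow> real" and y :: "nat \<Rightarrow> nat \<Rightarrow> real"
  shows "(\<forall>k<m. 0 \<le> c k \<and> y k \<in> co S) \<Longrightarrow> (\<Sum>k<m. c k) = 1 \<Longrightarrow>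
     (\<lambda>i. \<Sum>k<m. c k * y k i) \<in> co S"
proof (induction m arbitrary: c)
  case 0
  then show ?case by simp
next
  case (Suc m)
  define t where "t = (\<Sum>k<m. c k)"
  have t0: "0 \<le> t" unfolding t_def using Suc.prems by (intro sum_nonneg) auto
  have cm: "c m = 1 - t" using Suc.prems(2) unfolding t_def by simp
  have t1: "t \<le> 1" using cm Suc.prems(1) by auto
  show ?case
  proof (cases "t = 0")
    case True
    then have "\<forall>k\<in>{..<m}. c k = 0" unfolding t_def using Suc.prems(1)
      by (subst sum_nonneg_eq_0_iff[symmetric]) auto
    then have "(\<lambda>i. \<Sum>k<Suc m. c k * y k i) = y m" using cm True by auto
    then show ?thesis using Suc.prems(1) by simp
  next
    case False
    define c' where "c' k = c k / t" for k
    have "(\<lambda>i. \<Sum>k<m. c' k * y k i) \<in> co S"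
    proof (rule Suc.IH)
      show "\<forall>k<m. 0 \<le> c' k \<and> y k \<in> co S" using Suc.prems(1) t0 unfolding c'_def by auto
      show "(\<Sum>k<m. c' k) = 1" unfolding c'_def t_def[symmetric] sum_divide_distrib[symmetric]
        using False by simp
    qed
    from co_bin[OF this _ t0 t1, of "y m"] Suc.prems(1)
    have "(\<lambda>i. t * (\<Sum>k<m. c' k * y k i) + (1 - t) * y m i) \<in> co S" by simp
    moreover have "(\<lambda>i. t * (\<Sum>k<m. c' k * y k i) + (1 - t) * y m i) = (\<lambda>i. \<Sum>k<Suc m. c k * y k i)"
      using False cm unfolding c'_def by (simp add: sum_distrib_left)
    ultimately show ?thesis by simp
  qed
qed

lemma co_mono: assumes "\<forall>y\<in>S'. y \<in> co S" shows "co S' \<subseteq> co S"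
proof
  fix x assume "x \<in> co S'"
  have "\<exists>(m::nat) c p. (\<forall>j<m. 0 \<le> c j \<and> p j \<in> S') \<and> (\<Sum>j<m. c j) = 1 \<and> x = (\<lambda>i. \<Sum>j<m. c j * p j i)"
    using \<open>x \<in> co S'\<close> by (simp add: co_def)
  then obtain m :: nat and c p where "\<forall>j<m. 0 \<le> c j \<and> p j \<in> S'" "(\<Sum>j<m. c j) = 1"
    "x = (\<lambda>i. \<Sum>j<m. c j * p j i)" by blast
  then show "x \<in> co S" using co_comb[of m c p S] assms by auto
qed

lemma GS_const_one: "GS x (\<lambda>_. 1) z L = (\<Sum>k<L. x^k)"
  by (simp add: GS_def)

lemma GS_cong_shift: "(\<And>q. V' q = V (q + s)) \<Longrightarrow> GS x V' z L = GS x V (z + s) L"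
  unfolding GS_def by (intro sum.cong) (auto simp: ac_simps)

lemma part2_core:
  fixes V W :: "nat \<Rightarrow> real"
  assumes n: "n \<ge> 1" and T: "T \<ge> 1" and x: "0 < x" "x \<le> 1"
    and Vp: "\<forall>q. V (q + n*T) = V q"
    and W1: "\<And>l s. s < T \<Longrightarrow> W (l*(T+1) + s) = V (l*T + s)"
    and W2: "\<And>l. W (l*(T+1) + T) = GS x V ((l+1)*T) (n*T) / (\<Sum>k<n*T. x^k)"
  shows "GS x W (j*(T+1)) (n*(T+1)) / (\<Sum>k<n*(T+1). x^k) = GS x V (j*T) (n*T) / (\<Sum>k<n*T. x^k)"
proof -
  define S where "S = (\<Sum>k<n*T. x^k)"
  define S' where "S' = (\<Sum>k<n*(T+1). x^k)"
  define B where "B l = GS x V (l*T) T" for l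
  define G where "G l = GS x V (l*T) (n*T)" for l
  define B' where "B' l = GS x W (l*(T+1)) (T+1)" for l
  have S_pos: "S > 0" unfolding S_def
  proof -
    have "(\<Sum>k<n*T. x^k) \<ge> (\<Sum>k\<in>{0}. x^k)" using n T x
      by (intro sum_mono2) auto
    then show "(\<Sum>k<n*T. x^k) > 0" by simp
  qed
  have S'_pos: "S' > 0" unfolding S'_def
  proof -
    have "(\<Sum>k<n*(T+1). x^k) \<ge> (\<Sum>k\<in>{0}. x^k)" using n T x
      by (intro sum_mono2) auto
    then show "(\<Sum>k<n*(T+1). x^k) > 0" by simp
  qed
  have Gb: "G l = GS (x^T) B l n" for l unfolding G_def B_def by (rule GS_blocks)
  have Wb: "GS x W (j*(T+1)) (n*(T+1)) = GS (x^(T+1)) B' j n" unfolding B'_def by (rule GS_blocks)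
  have Bp: "\<forall>l. B (l + n) = B l"
  proof
    fix l
    show "B (l + n) = B l" unfolding B_def GS_def
    proof (rule sum.cong)
      fix r
      have "V ((l+n)*T + r) = V (l*T + r + n*T)" by (simp add: algebra_simps)
      then show "x^r * V ((l+n)*T + r) = x^r * V (l*T + r)" using Vp by simp
    qed simp
  qed
  have Grec: "G l = (1 - x^(n*T)) * B l + x^T * G (Suc l)" for l
    using GS_rec[OF Bp, of "x^T" l] unfolding Gb by (simp add: power_mult mult.commute)
  have Gp: "G (l + n) = G l" for l unfolding Gb by (rule GS_per[OF Bp])
  have B'e: "B' l = B l + x^T * G (Suc l) / S" for l
  proof -
    have "B' l = (\<Sum>r<T. x^r * W (l*(T+1) + r)) + x^T * W (l*(T+1) + T)"
      unfolding B'_def GS_def by simp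
    also have "(\<Sum>r<T. x^r * W (l*(T+1) + r)) = B l"
      unfolding B_def GS_def
    proof (rule sum.cong)
      fix r assume "r \<in> {..<T}"
      then have "W (l*(T+1) + r) = V (l*T + r)" using W1 by simp
      then show "x^r * W (l*(T+1) + r) = x^r * V (l*T + r)" by simp
    qed simp
    also have "W (l*(T+1) + T) = G (Suc l) / S" unfolding W2 G_def S_def by simp
    finally show ?thesis by simp
  qed
  show ?thesis
  proof (cases "x = 1")
    case True
    have Sv: "S = real (n*T)" unfolding S_def True by simp
    have S'v: "S' = real (n*(T+1))" unfolding S'_def True by simp
    have Gc: "G l = G 0" for l
    proof (induction l)
      case (Suc l)
      then show ?case using Grec[of l] True by simp
    qed simp
    have "GS x W (j*(T+1)) (n*(T+1)) = (\<Sum>m<n. (x^(T+1))^m * B' (j+m))"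
      by (subst Wb) (simp add: GS_def)
    also have "\<dots> = (\<Sum>m<n. B (j+m) + G (Suc (j+m)) / S)"
      unfolding B'e True by simp
    also have "\<dots> = (\<Sum>m<n. B (j+m) + G 0 / S)"
      by (intro sum.cong refl) (metis Gc)
    also have "\<dots> = G j + n * G 0 / S"
      using Gb[of j] True by (simp add: sum.distrib GS_def)
    also have "\<dots> = G j * S' / S"
    proof -
      have "real T > 0" "real n > 0" using n T by auto
      then show ?thesis using Gc[of j] unfolding Sv S'v by (simp add: field_simps)
    qed
    finally show ?thesis using S_pos S'_pos unfolding S_def[symmetric] S'_def[symmetric] G_def[symmetric]
      by (simp add: field_simps)
  next
    case False
    then have x1: "1 - x \<noteq> 0" by simp
    have SL: "(1 - x) * S = 1 - x^(n*T)" unfolding S_def by (simp add: one_diff_power_eq)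
    have SL': "(1 - x) * S' = 1 - x^(n*(T+1))" unfolding S'_def by (simp add: one_diff_power_eq)
    define y where "y = x^(T+1)"
    have key: "(1 - x) * S * B' l = G l - y * G (Suc l)" for l
    proof -
      have "(1 - x) * S * B' l = ((1 - x) * S) * B l + (1-x) * x^T * G (Suc l)"
        unfolding B'e using S_pos by (simp add: field_simps)
      also have "\<dots> = (1 - x^(n*T)) * B l + (1-x) * x^T * G (Suc l)" unfolding SL ..
      also have "\<dots> = G l - y * G (Suc l)" using Grec[of l] unfolding y_def by (simp add: algebra_simps)
      finally show ?thesis .
    qed
    have "(1 - x) * S * GS x W (j*(T+1)) (n*(T+1)) = (\<Sum>m<n. y^m * ((1 - x) * S * B' (j+m)))"
      by (subst Wb) (simp add: GS_def y_def sum_distrib_left algebra_simps)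
    also have "\<dots> = (\<Sum>m<n. y^m * G (j+m) - y^(Suc m) * G (j + Suc m))"
      unfolding key by (intro sum.cong) (simp_all add: algebra_simps)
    also have "\<dots> = G j - y^n * G (j+n)"
      by (subst sum_lessThan_telescope'[where f="\<lambda>m. y^m * G (j+m)"]) simp
    also have "\<dots> = (1 - x) * S' * G j"
    proof -
      have "(x^(T+1))^n = x^(n*(T+1))" by (metis mult.commute power_mult)
      then show ?thesis unfolding Gp SL' y_def by (simp add: algebra_simps)
    qed
    finally have "S * GS x W (j*(T+1)) (n*(T+1)) = S' * G j" using x1 by simp
    then show ?thesis using S_pos S'_pos unfolding S_def[symmetric] S'_def[symmetric] G_def[symmetric]
      by (simp add: field_simps)
  qed
qed

lemma per_range: "L > 0 \<Longrightarrow> per L s \<in> {1..L}"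
  unfolding per_def by (simp add: Suc_le_eq)

lemma per_Suc: "per L (Suc q) = q mod L + 1"
  by (simp add: per_def)

lemma per_per: "L > 0 \<Longrightarrow> per L (per L (Suc q) + s) = per L (Suc (q + s))"
  by (simp add: per_def mod_add_left_eq)

lemma per_block: "per (n*T) ((l mod n)*T + r + 1) = per (n*T) (l*T + r + 1)"
proof -
  have eq: "l*T + r = ((l mod n)*T + r) + (l div n) * (n*T)"
    using div_mult_mod_eq[of l n] by (metis add.commute add.left_commute distrib_right mult.assoc mult.commute)
  have "(l*T + r) mod (n*T) = ((l mod n)*T + r) mod (n*T)" unfolding eq mod_mult_self1 ..
  then show ?thesis by (simp add: per_def)
qed

lemma mod_block: fixes l s T n :: nat assumes "s < T + 1" "n > 0"
  shows "(l*(T+1) + s) mod (n*(T+1)) = (l mod n)*(T+1) + s"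
proof -
  have eq: "l*(T+1) + s = ((l mod n)*(T+1) + s) + (l div n) * (n*(T+1))"
    using div_mult_mod_eq[of l n] by (metis add.commute add.left_commute distrib_right mult.assoc mult.commute)
  have lt: "(l mod n)*(T+1) + s < n*(T+1)"
  proof -
    have "l mod n + 1 \<le> n" using assms(2) by (simp add: Suc_le_eq)
    then have "(l mod n + 1)*(T+1) \<le> n*(T+1)" by (rule mult_right_mono) simp
    then show ?thesis using assms(1) by (simp add: algebra_simps)
  qed
  show ?thesis unfolding eq mod_mult_self1 using lt by (rule mod_less)
qed

lemma Upay_GS:
  "Upay n T \<delta> u a i = GS \<delta> (\<lambda>q. u i (a (per (n*T) (Suc q)))) ((i-1)*T) (n*T) / (\<Sum>k<n*T. \<delta>^k)"
proof -
  have h: "\<And>g::nat\<Rightarrow>real. (\<Sum>k=1..n*T. g k) = (\<Sum>k<n*T. g (Suc k))"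
    using sum.atLeast1_atMost_eq by (metis One_nat_def)
  show ?thesis unfolding Upay_def GS_def h by (simp add: add.commute add.left_commute)
qed

lemma GS_lin:
  fixes c :: "nat \<Rightarrow> real" and V :: "nat \<Rightarrow> nat \<Rightarrow> real"
  shows "(\<Sum>k<m. c k * GS x (V k) z L) = GS x (\<lambda>q. \<Sum>k<m. c k * V k q) z L"
  unfolding GS_def by (simp add: sum_distrib_left sum.swap[of _ "{..<m}"] algebra_simps)

lemma part1:
  fixes n T :: nat and \<delta> \<delta>' :: real and Aset :: "nat \<Rightarrow> 'a set" and u :: "nat \<Rightarrow> (nat \<Rightarrow> 'a) \<Rightarrow> real"
  assumes n: "n \<ge> 2" and h: "0 < \<delta>" "\<delta> < \<delta>'" "\<delta>' \<le> 1" "T \<ge> 1"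
  shows "Fset n Aset u \<delta>' T \<subseteq> Fset n Aset u \<delta> T"
  unfolding Fset_def
proof (rule co_mono, rule ballI)
  define L where "L = n*T"
  define P where "P = PiE {1..L} (\<lambda>_. PiE {1..n} Aset)"
  have L0: "L > 0" "L \<ge> 1" unfolding L_def using n h by auto
  fix y assume "y \<in> Uvec n T \<delta>' u ` PiE {1..n*T} (\<lambda>_. PiE {1..n} Aset)"
  then obtain a where a: "a \<in> P" and y: "y = Uvec n T \<delta>' u a" unfolding P_def L_def by auto
  define b where "b s = (\<lambda>p. if p \<in> {1..L} then a (per L (p+s)) else undefined)" for s
  have bP: "b s \<in> P" for s
    using a per_range[OF L0(1)] unfolding P_def b_def by (auto simp: PiE_iff extensional_def)
  define S where "S x = (\<Sum>k<L. x^k)" for x :: real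
  have Spos: "S x > 0" if "x > 0" for x
  proof -
    have "(\<Sum>k<L. x^k) \<ge> (\<Sum>k\<in>{0}. x^k)" using L0 that by (intro sum_mono2) auto
    then show ?thesis unfolding S_def by simp
  qed
  have dL: "1 - \<delta>^L > 0" using h L0 by (simp add: power_less_one_iff)
  define c where "c s = lam \<delta> \<delta>' L s * S \<delta> / ((1 - \<delta>^L) * S \<delta>')" for s
  have lam_nn: "lam \<delta> \<delta>' L s \<ge> 0" for s
  proof (cases "s = 0")
    case True
    have "\<delta>'^(L-1) \<le> 1" using h by (simp add: power_le_one)
    then have "\<delta> * \<delta>'^(L-1) \<le> 1" using h by (metis less_eq_real_def less_trans mult_le_one zero_le_power)
    then show ?thesis using True unfolding lam_def by simp
  next
    case False
    then show ?thesis unfolding lam_def using h by simp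
  qed
  have c_nn: "c s \<ge> 0" for s unfolding c_def using lam_nn[of s] Spos[of \<delta>] Spos[of \<delta>'] h dL by simp
  have c_sum: "(\<Sum>s<L. c s) = 1"
  proof -
    have one_per: "\<forall>q. (\<lambda>_. 1::real) (q + L) = (\<lambda>_. 1) q" by simp
    have "(1 - \<delta>^L) * S \<delta>' = (\<Sum>s<L. lam \<delta> \<delta>' L s * S \<delta>)"
      using part1_id[OF one_per L0(2), of \<delta> \<delta>' 0] unfolding GS_const_one S_def by simp
    then have e: "(\<Sum>s<L. lam \<delta> \<delta>' L s * S \<delta>) = (1 - \<delta>^L) * S \<delta>'" by simp
    have "(\<Sum>s<L. c s) = (\<Sum>s<L. lam \<delta> \<delta>' L s * S \<delta>) / ((1 - \<delta>^L) * S \<delta>')"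
      unfolding c_def sum_divide_distrib ..
    also have "\<dots> = 1" unfolding e using dL Spos[of \<delta>'] h by simp
    finally show ?thesis .
  qed
  have eq: "Uvec n T \<delta>' u a = (\<lambda>i. \<Sum>s<L. c s * Uvec n T \<delta> u (b s) i)"
  proof
    fix i
    show "Uvec n T \<delta>' u a i = (\<Sum>s<L. c s * Uvec n T \<delta> u (b s) i)"
    proof (cases "i \<in> {1..n}")
      case False
      then have "\<And>w. Uvec n T \<delta> u w i = 0" "Uvec n T \<delta>' u a i = 0" unfolding Uvec_def by auto
      then show ?thesis by simp
    next
      case True
      define V where "V q = u i (a (per L (Suc q)))" for q
      define z where "z = (i-1)*T"
      have Vp: "\<forall>q. V (q + L) = V q" unfolding V_def by (simp add: per_Suc)
      have Vb: "GS \<delta> (\<lambda>q. u i (b s (per L (Suc q)))) z L = GS \<delta> V (z+s) L" for s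
      proof (rule GS_cong_shift)
        fix q
        show "u i (b s (per L (Suc q))) = V (q + s)"
          unfolding b_def V_def using per_range[OF L0(1), of "Suc q"] per_per[OF L0(1), of q s] by simp
      qed
      have lhs: "Uvec n T \<delta>' u a i = GS \<delta>' V z L / S \<delta>'"
        using True unfolding Uvec_def Upay_GS V_def z_def S_def L_def by simp
      have rhs: "Uvec n T \<delta> u (b s) i = GS \<delta> V (z+s) L / S \<delta>" for s
        using True Vb[of s] unfolding Uvec_def Upay_GS z_def S_def L_def by simp
      have "(\<Sum>s<L. c s * Uvec n T \<delta> u (b s) i) = (\<Sum>s<L. lam \<delta> \<delta>' L s * GS \<delta> V (z+s) L) / ((1 - \<delta>^L) * S \<delta>')"
        unfolding rhs c_def sum_divide_distrib using Spos[of \<delta>] h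
        by (intro sum.cong refl) (simp add: field_simps)
      also have "\<dots> = GS \<delta>' V z L / S \<delta>'"
        unfolding part1_id[OF Vp L0(2), symmetric] using dL by simp
      finally show ?thesis unfolding lhs by simp
    qed
  qed
  have "(\<lambda>i. \<Sum>s<L. c s * Uvec n T \<delta> u (b s) i) \<in> co (Uvec n T \<delta> u ` P)"
  proof (rule co_comb)
    show "\<forall>k<L. 0 \<le> c k \<and> Uvec n T \<delta> u (b k) \<in> co (Uvec n T \<delta> u ` P)"
      using c_nn bP by (auto intro: co_base)
    show "(\<Sum>k<L. c k) = 1" by (rule c_sum)
  qed
  then show "y \<in> co (Uvec n T \<delta> u ` PiE {1..n*T} (\<lambda>_. PiE {1..n} Aset))"
    using eq y unfolding P_def L_def by simp
qed

lemma dm1: fixes m s T :: nat assumes "s < T + 1" shows "(m*(T+1) + s) div (T+1) = m"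
proof -
  have "(s + m*(T+1)) div (T+1) = m + s div (T+1)" by (rule div_mult_self1) simp
  then show ?thesis using assms by (simp add: add.commute)
qed
lemma dm2: fixes m s T :: nat assumes "s < T + 1" shows "(m*(T+1) + s) mod (T+1) = s"
proof -
  have "(s + m*(T+1)) mod (T+1) = s mod (T+1)" by (rule mod_mult_self1)
  then show ?thesis using assms by (simp add: add.commute)
qed

lemma part2:
  fixes n T :: nat and \<delta> :: real and Aset :: "nat \<Rightarrow> 'a set" and u :: "nat \<Rightarrow> (nat \<Rightarrow> 'a) \<Rightarrow> real"
  assumes n: "n \<ge> 2" and h: "0 < \<delta>" "\<delta> \<le> 1" "T \<ge> 1"
  shows "Fset n Aset u \<delta> T \<subseteq> Fset n Aset u \<delta> (T+1)"
  unfolding Fset_def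
proof (rule co_mono, rule ballI)
  define L where "L = n*T"
  define L' where "L' = n*(T+1)"
  define P where "P = PiE {1..L} (\<lambda>_. PiE {1..n} Aset)"
  define P' where "P' = PiE {1..L'} (\<lambda>_. PiE {1..n} Aset)"
  have L0: "L > 0" "L' > 0" unfolding L_def L'_def using n h by auto
  fix y assume "y \<in> Uvec n T \<delta> u ` PiE {1..n*T} (\<lambda>_. PiE {1..n} Aset)"
  then obtain a where a: "a \<in> P" and y: "y = Uvec n T \<delta> u a" unfolding P_def L_def by auto
  define b where "b k = (\<lambda>p. if p \<in> {1..L'} then a (per L (if (p-1) mod (T+1) < T
      then ((p-1) div (T+1))*T + (p-1) mod (T+1) + 1 else ((p-1) div (T+1) + 1)*T + k + 1))
      else undefined)" for k
  have bP: "b k \<in> P'" for k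
    using a per_range[OF L0(1)] unfolding P_def P'_def b_def by (auto simp: PiE_iff extensional_def)
  have bval: "b k (per L' (Suc (l*(T+1) + s))) = a (per L (if s < T then l*T + s + 1 else (l+1)*T + k + 1))"
    if s: "s < T + 1" for k l s
  proof -
    have m: "(l*(T+1) + s) mod L' = (l mod n)*(T+1) + s"
      unfolding L'_def using mod_block[OF s, of n l] n by simp
    have r: "per L' (Suc (l*(T+1) + s)) \<in> {1..L'}" by (rule per_range[OF L0(2)])
    have p1: "per L' (Suc (l*(T+1) + s)) - 1 = (l mod n)*(T+1) + s" unfolding per_Suc m by simp
    have d: "((l mod n)*(T+1) + s) div (T+1) = l mod n" "((l mod n)*(T+1) + s) mod (T+1) = s"
      using dm1[OF s] dm2[OF s] by simp_all
    have "b k (per L' (Suc (l*(T+1) + s))) = a (per L (if s < T then (l mod n)*T + s + 1 else (l mod n + 1)*T + k + 1))"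
      unfolding b_def using r p1 d by simp
    also have "\<dots> = a (per L (if s < T then l*T + s + 1 else (l+1)*T + k + 1))"
    proof (cases "s < T")
      case True
      then show ?thesis unfolding L_def using per_block[of n T l s] by simp
    next
      case False
      have "(l mod n + 1)*T + k + 1 = (l mod n)*T + (T+k) + 1" by (simp add: algebra_simps)
      moreover have "(l+1)*T + k + 1 = l*T + (T+k) + 1" by (simp add: algebra_simps)
      ultimately show ?thesis using False unfolding L_def using per_block[of n T l "T+k"] by (simp add: ac_simps)
    qed
    finally show ?thesis .
  qed
  define S where "S = (\<Sum>k<L. \<delta>^k)"
  have Spos: "S > 0"
  proof -
    have "(\<Sum>k<L. \<delta>^k) \<ge> (\<Sum>k\<in>{0}. \<delta>^k)" using L0 h by (intro sum_mono2) auto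
    then show ?thesis unfolding S_def by simp
  qed
  define c where "c k = \<delta>^k / S" for k
  have c_nn: "c k \<ge> 0" for k unfolding c_def using Spos h by simp
  have c_sum: "(\<Sum>k<L. c k) = 1" unfolding c_def sum_divide_distrib[symmetric] S_def[symmetric]
    using Spos by simp
  have eq: "Uvec n T \<delta> u a = (\<lambda>i. \<Sum>k<L. c k * Uvec n (T+1) \<delta> u (b k) i)"
  proof
    fix i
    show "Uvec n T \<delta> u a i = (\<Sum>k<L. c k * Uvec n (T+1) \<delta> u (b k) i)"
    proof (cases "i \<in> {1..n}")
      case False
      then have "\<And>w. Uvec n (T+1) \<delta> u w i = 0" "Uvec n T \<delta> u a i = 0" unfolding Uvec_def by auto
      then show ?thesis by simp
    next
      case True
      define V where "V q = u i (a (per L (Suc q)))" for q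
      define Vk where "Vk k q = u i (b k (per L' (Suc q)))" for k q
      define W where "W q = (\<Sum>k<L. c k * Vk k q)" for q
      have Vp: "\<forall>q. V (q + n*T) = V q" unfolding V_def L_def by (simp add: per_Suc)
      have W1: "W (l*(T+1) + s) = V (l*T + s)" if "s < T" for l s
      proof -
        have "W (l*(T+1) + s) = (\<Sum>k<L. c k * V (l*T + s))"
          unfolding W_def Vk_def V_def using bval[of s] that by simp
        also have "\<dots> = V (l*T + s)" unfolding sum_distrib_right[symmetric] c_sum by simp
        finally show ?thesis .
      qed
      have W2: "W (l*(T+1) + T) = GS \<delta> V ((l+1)*T) (n*T) / (\<Sum>k<n*T. \<delta>^k)" for l
      proof -
        have "W (l*(T+1) + T) = (\<Sum>k<L. c k * V ((l+1)*T + k))"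
          unfolding W_def Vk_def V_def using bval[of T] by simp
        also have "\<dots> = GS \<delta> V ((l+1)*T) (n*T) / (\<Sum>k<n*T. \<delta>^k)"
          unfolding GS_def c_def S_def L_def sum_divide_distrib by simp
        finally show ?thesis .
      qed
      have core: "GS \<delta> W ((i-1)*(T+1)) (n*(T+1)) / (\<Sum>k<n*(T+1). \<delta>^k) = GS \<delta> V ((i-1)*T) (n*T) / (\<Sum>k<n*T. \<delta>^k)"
        by (rule part2_core[OF _ h(3) h(1) h(2) Vp W1 W2]) (use n in simp_all)
      have lhs: "Uvec n T \<delta> u a i = GS \<delta> V ((i-1)*T) (n*T) / (\<Sum>k<n*T. \<delta>^k)"
        using True unfolding Uvec_def Upay_GS V_def L_def by simp
      have rhs: "Uvec n (T+1) \<delta> u (b k) i = GS \<delta> (Vk k) ((i-1)*(T+1)) (n*(T+1)) / (\<Sum>k<n*(T+1). \<delta>^k)" for k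
        using True unfolding Uvec_def Upay_GS Vk_def L'_def by simp
      have "(\<Sum>k<L. c k * Uvec n (T+1) \<delta> u (b k) i) = (\<Sum>k<L. c k * GS \<delta> (Vk k) ((i-1)*(T+1)) (n*(T+1))) / (\<Sum>k<n*(T+1). \<delta>^k)"
        unfolding rhs sum_divide_distrib by simp
      also have "\<dots> = GS \<delta> W ((i-1)*(T+1)) (n*(T+1)) / (\<Sum>k<n*(T+1). \<delta>^k)"
        unfolding GS_lin W_def ..
      finally show ?thesis unfolding lhs core by simp
    qed
  qed
  have "(\<lambda>i. \<Sum>k<L. c k * Uvec n (T+1) \<delta> u (b k) i) \<in> co (Uvec n (T+1) \<delta> u ` P')"
  proof (rule co_comb)
    show "\<forall>k<L. 0 \<le> c k \<and> Uvec n (T+1) \<delta> u (b k) \<in> co (Uvec n (T+1) \<delta> u ` P')"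
      using c_nn bP by (auto intro: co_base)
    show "(\<Sum>k<L. c k) = 1" by (rule c_sum)
  qed
  then show "y \<in> co (Uvec n (T+1) \<delta> u ` PiE {1..n*(T+1)} (\<lambda>_. PiE {1..n} Aset))"
    using eq y unfolding P'_def L'_def by simp
qed

theorem theorem2:
  fixes n :: nat and Aset :: "nat \<Rightarrow> 'a set" and u :: "nat \<Rightarrow> (nat \<Rightarrow> 'a) \<Rightarrow> real"
  assumes "n \<ge> 2"
    and "\<forall>i\<in>{1..n}. finite (Aset i) \<and> Aset i \<noteq> {}"
  shows "(\<forall>\<delta> \<delta>' T. 0 < \<delta> \<and> \<delta> < \<delta>' \<and> \<delta>' \<le> 1 \<and> T \<ge> 1 \<longrightarrow>
            Fset n Aset u \<delta>' T \<subseteq> Fset n Aset u \<delta> T)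
       \<and> (\<forall>\<delta> T. 0 < \<delta> \<and> \<delta> \<le> 1 \<and> T \<ge> 1 \<longrightarrow>
            Fset n Aset u \<delta> T \<subseteq> Fset n Aset u \<delta> (T + 1))"
  using part1[OF assms(1)] part2[OF assms(1)] by blast

end
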